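(* $$\sum_{n\geq 1}\frac{\binom{4n}{2n}\binom{2n}{n}}{n\,64^n} = \frac{3}{16}\cdot {}_{4}F_{3}\left[ \begin{matrix} 1,1,\tfrac{5}{4},\tfrac{7}{4} \\ 2,2,2 \end{matrix} \ \Bigg| \ 1 \right] = 6\ln 2-2\ln(1+\sqrt{2})-\frac{16}{\pi}\operatorname{Im}\operatorname{Li}_2\!\left[(\sqrt{2}-1)i\right].$$
   Context: ${}_pF_q\left[\begin{matrix} a_1,\dots,a_p\\ b_1,\dots,b_q\end{matrix}\,\Big|\, z\right] = \sum_{n\ge 0} \frac{(a_1)_n\cdots(a_p)_n}{(b_1)_n\cdots(b_q)_n}\frac{z^n}{n!}$ with $(x)_n = \Gamma(x+n)/\Gamma(x)$. $\operatorname{Li}_2(z) = \sum_{k\ge1} z^k/k^2$ is the dilogarithm. *)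

theory Defs
  imports "HOL-Analysis.Analysis"
begin

definition hypergeom_term :: "real list \<Rightarrow> real list \<Rightarrow> real \<Rightarrow> nat \<Rightarrow> real" where
  "hypergeom_term as bs z n =
     (\<Prod>a\<leftarrow>as. pochhammer a n) / (\<Prod>b\<leftarrow>bs. pochhammer b n) * z ^ n / fact n"

definition hypergeom :: "real list \<Rightarrow> real list \<Rightarrow> real \<Rightarrow> real" where
  "hypergeom as bs z = (\<Sum>n. hypergeom_term as bs z n)"

definition Li2 :: "complex \<Rightarrow> complex" where
  "Li2 z = (\<Sum>k. z ^ (Suc k) / of_nat (Suc k) ^ 2)"

end

theory Submission
  imports Defs
begin

definition w :: "nat \<Rightarrow> real" where "w m = real ((2*m) choose m) / 4^m"

lemma choose_central_real: "real ((2*m) choose m) = fact (2*m) / (fact m)^2"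
  by (simp add: binomial_fact power2_eq_square mult_2)

lemma w_Suc: "w (Suc m) = w m * (2*real m+1) / (2*real m+2)"
proof -
  have f: "fact (2 * Suc m) = (fact (2*m) :: real) * (2*real m+1) * (2*real m+2)"
    by (simp add: fact_Suc algebra_simps)
  have g: "(fact (Suc m) :: real) = fact m * (real m+1)" by (simp add: fact_Suc algebra_simps)
  have "w (Suc m) = fact (2*m) * (2*real m+1) * (2*real m+2) / ((fact m)^2 * (real m+1)^2 * (4 * 4^m))"
    unfolding w_def choose_central_real f g power_mult_distrib power_Suc by (simp add: power2_eq_square algebra_simps)
  also have "\<dots> = (fact (2*m) / ((fact m)^2 * 4^m)) * (2*real m+1) * ((2*real m+2) / (4*(real m+1)^2))"
    by (simp add: field_simps)
  also have "(2*real m+2) / (4*(real m+1)^2) = 1 / (2*real m+2)"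
  proof -
    have a: "(2*real m+2) > 0" by simp
    have e: "4*(real m+1)^2 = (2*real m+2)*(2*real m+2)" by (simp add: power2_eq_square algebra_simps)
    show ?thesis by (subst e) (use a in simp)
  qed
  finally show ?thesis unfolding w_def choose_central_real by simp
qed

lemma w_pos: "w m > 0" unfolding w_def by simp

lemma w_0: "w 0 = 1" by (simp add: w_def)

lemma w_sq_bound: "(w m)^2 * (m+1) \<le> 1"
proof (induction m)
  case 0 then show ?case by (simp add: w_0)
next
  case (Suc m)
  have "(w (Suc m))^2 * (real (Suc m) + 1) = (w m)^2 * ((2*real m+1)^2 * (real m+2) / (2*real m+2)^2)"
    by (simp add: w_Suc power_divide power_mult_distrib field_simps) (simp add: algebra_simps power2_eq_square)
  also have "\<dots> \<le> (w m)^2 * (real m+1)"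
  proof (rule mult_left_mono)
    have pos: "(2*real m+2)^2 > 0" by simp
    have "(2*real m+1)^2 * (real m+2) \<le> (real m + 1) * (2*real m+2)^2"
      by (simp add: power2_eq_square algebra_simps)
    then show "(2*real m+1)^2 * (real m+2) / (2*real m+2)^2 \<le> real m + 1"
      using pos by (simp add: divide_le_eq)
  qed simp
  finally show ?case using Suc.IH by (simp add: add.commute)
qed

lemma w_le1: "w m \<le> 1"
proof -
  have "(w m)^2 * 1 \<le> (w m)^2 * (real m+1)"
    by (intro mult_left_mono) auto
  then have "(w m)^2 \<le> 1" using w_sq_bound[of m] by (simp add: add.commute)
  then show ?thesis using w_pos[of m] by (simp add: power_le_one_iff abs_le_iff power2_le_iff_abs_le)
qed

lemma w_2Suc: "w (2*Suc m) = w (2*m) * (4*real m+1) * (4*real m+3) / ((4*real m+2)*(4*real m+4))"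
proof -
  have "w (2*Suc m) = w (Suc (Suc (2*m)))" by simp
  also have "\<dots> = w (2*m) * (4*real m+1) / (4*real m+2) * (4*real m+3) / (4*real m+4)"
    unfolding w_Suc by (simp add: algebra_simps)
  finally show ?thesis by simp
qed

definition tt :: "nat \<Rightarrow> real" where
  "tt = (\<lambda>n::nat. real ((4*n) choose (2*n)) * real ((2*n) choose n) / (real n * 64 ^ n))"

lemma tt_w: "tt n = w (2*n) * w n / n"
proof -
  have "real ((4*n) choose (2*n)) = w (2*n) * 16^n"
  proof -
    have "(4::real)^(2*n) = 16^n" by (simp add: power_mult)
    then show ?thesis unfolding w_def by simp
  qed
  moreover have "real ((2*n) choose n) = w n * 4^n" unfolding w_def by simp
  ultimately show ?thesis unfolding tt_def
    by (simp add: field_simps power_mult_distrib[symmetric])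
qed

lemma tt_rec0: "m > 0 \<Longrightarrow> tt (Suc m) = tt m * (real m*(4*real m+1)*(4*real m+3)/(16*(real m+1)^3))"
proof -
  assume m: "m > 0"
  define a where "a = w (2*m)"
  define b where "b = w m"
  have "tt (Suc m) = (a * (4*real m+1) * (4*real m+3) / ((4*real m+2)*(4*real m+4)))
       * (b * (2*real m+1) / (2*real m+2)) / (real m + 1)"
    unfolding tt_w w_2Suc w_Suc a_def b_def by simp
  also have "\<dots> = (a * b / real m) * (real m*(4*real m+1)*(4*real m+3)/(16*(real m+1)^3))"
  proof -
    have e1: "4*real m+2 = 2*(2*real m+1)" "4*real m+4 = 4*(real m+1)" "2*real m+2 = 2*(real m+1)" by simp_all
    have h: "2*real m+1 > 0" "real m + 1 > 0" "real m > 0" using m by simp_all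
    show ?thesis using h by (auto simp add: divide_simps) (simp add: algebra_simps power3_eq_cube)
  qed
  finally show ?thesis unfolding tt_w a_def b_def .
qed

lemma tt_rec: "tt (Suc (Suc n)) = tt (Suc n) * ((real n+5/4)*(real n+7/4)*(real n+1)/(real n+2)^3)"
proof -
  have "tt (Suc (Suc n)) = tt (Suc n) * (real (Suc n)*(4*real (Suc n)+1)*(4*real (Suc n)+3)/(16*(real (Suc n)+1)^3))"
    by (rule tt_rec0) simp
  also have "(real (Suc n)*(4*real (Suc n)+1)*(4*real (Suc n)+3)/(16*(real (Suc n)+1)^3))
     = ((real n+5/4)*(real n+7/4)*(real n+1)/(real n+2)^3)"
  proof -
    have e: "real (Suc n) = real n + 1" by simp
    have h: "real n + 1 > 0" "real n + 2 > 0" by simp_all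
    show ?thesis unfolding e using h by (auto simp add: divide_simps) (simp add: algebra_simps power3_eq_cube)
  qed
  finally show ?thesis .
qed

abbreviation hh where "hh \<equiv> hypergeom_term [1, 1, 5/4, 7/4] [2, 2, 2] 1"

lemma hh_0: "hh 0 = 1" by (simp add: hypergeom_term_def)

lemma hh_rec: "hh (Suc n) = hh n * ((real n+5/4)*(real n+7/4)*(real n+1)/(real n+2)^3)"
proof -
  define p1 where "p1 = pochhammer (1::real) n"
  define p5 where "p5 = pochhammer (5/4::real) n"
  define p7 where "p7 = pochhammer (7/4::real) n"
  define p2 where "p2 = pochhammer (2::real) n"
  define f where "f = (fact n :: real)"
  have p2: "p2 > 0" unfolding p2_def by (simp add: pochhammer_pos)
  have f: "f > 0" unfolding f_def by simp
  have A: "hh (Suc n) = (p1*(1+n))*(p1*(1+n))*(p5*(5/4+n))*(p7*(7/4+n)) / ((p2*(2+n))*(p2*(2+n))*(p2*(2+n))) / (f * (n+1))"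
    unfolding hypergeom_term_def p1_def p5_def p7_def p2_def f_def by (simp add: pochhammer_Suc fact_Suc mult_ac)
  have B: "hh n = p1*p1*p5*p7 / (p2*p2*p2) / f"
    unfolding hypergeom_term_def p1_def p5_def p7_def p2_def f_def by (simp add: mult_ac)
  have "real n + 1 > 0" "real n + 2 > 0" by simp_all
  then show ?thesis unfolding A B using p2 f by (auto simp add: divide_simps) (simp add: algebra_simps power3_eq_cube)
qed

lemma tt_hh: "tt (Suc n) = 3/16 * hh n"
proof (induction n)
  case 0
  have "tt 1 = 3/16" unfolding tt_def by (simp add: binomial_fact numeral_eq_Suc)
  then show ?case by (simp add: hh_0)
next
  case (Suc n)
  then show ?case unfolding tt_rec hh_rec Suc.IH by simp
qed

lemma w_nonneg: "w m \<ge> 0" using w_pos[of m] by simp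

lemma ww_bound: "w (2*n) * w n * (real n + 1) \<le> 1"
proof -
  have a: "(w (2*n))^2 * (2*real n+1) \<le> 1" using w_sq_bound[of "2*n"] by (simp add: add.commute)
  have b: "(w n)^2 * (real n+1) \<le> 1" using w_sq_bound[of n] by (simp add: add.commute)
  have "(w (2*n) * w n * (real n + 1))^2 \<le> ((w (2*n))^2 * (2*real n+1)) * ((w n)^2 * (real n+1))"
  proof -
    have "(w (2*n) * w n * (real n + 1))^2 = (w (2*n))^2 * (w n)^2 * ((real n+1)*(real n+1))"
      by (simp add: power_mult_distrib power2_eq_square)
    also have "\<dots> \<le> (w (2*n))^2 * (w n)^2 * ((2*real n+1)*(real n+1))"
      by (intro mult_left_mono mult_right_mono) auto
    finally show ?thesis by (simp add: mult_ac)
  qed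
  also have "\<dots> \<le> 1 * 1"
    by (intro mult_mono a b) auto
  finally have "(w (2*n) * w n * (real n + 1))^2 \<le> 1^2" by simp
  then show ?thesis by (rule power2_le_imp_le) simp
qed

lemma tt_nonneg: "tt n \<ge> 0" unfolding tt_w by (simp add: w_nonneg)

lemma tt_bound: "tt (Suc n) \<le> 1 / (real (Suc n))^2"
proof -
  have "w (2*Suc n) * w (Suc n) \<le> 1 / (real (Suc n) + 1)"
    using ww_bound[of "Suc n"] by (simp add: field_simps)
  also have "\<dots> \<le> 1 / real (Suc n)" by (simp add: frac_le)
  finally have "w (2*Suc n) * w (Suc n) \<le> 1 / real (Suc n)" .
  then have "w (2*Suc n) * w (Suc n) / real (Suc n) \<le> 1 / real (Suc n) / real (Suc n)"
    by (intro divide_right_mono) auto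
  then show ?thesis unfolding tt_w by (simp add: power2_eq_square)
qed

lemma summable_tt: "summable (\<lambda>n. tt (Suc n))"
proof (rule summable_comparison_test')
  show "summable (\<lambda>n. 1 / (real (Suc n))^2)"
    using inverse_power_summable[of 2, where 'a=real] summable_Suc_iff[of "\<lambda>n. inverse (real n ^ 2)"]
    by (simp add: divide_inverse)
  show "norm (tt (Suc n)) \<le> 1 / (real (Suc n))^2" for n
    using tt_bound[of n] tt_nonneg[of "Suc n"] by simp
qed

definition cc :: "nat \<Rightarrow> real" where "cc n = w (2*n) / real n"

lemma cc_nonneg: "cc n \<ge> 0" unfolding cc_def by (simp add: w_nonneg)

lemma cc_sq: "n \<ge> 1 \<Longrightarrow> (cc n)^2 \<le> 1 / real n ^ 3"
proof -
  assume n: "n \<ge> 1"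
  have a: "(w (2*n))^2 * (2*real n+1) \<le> 1" using w_sq_bound[of "2*n"] by (simp add: add.commute)
  have b: "(w (2*n))^2 \<le> 1/(2*real n+1)" using a by (simp add: le_divide_eq)
  have c: "1/(2*real n+1) \<le> 1 / real n"
    using n by (intro divide_left_mono) auto
  have "(cc n)^2 = (w (2*n))^2 / (real n)^2" unfolding cc_def by (simp add: power_divide)
  also have "\<dots> \<le> (1 / real n) / (real n)^2"
    using b c by (intro divide_right_mono) auto
  also have "\<dots> = 1 / real n ^ 3" by (simp add: power2_eq_square power3_eq_cube)
  finally show ?thesis .
qed

lemma powr_sq_aux: "(x::real) > 0 \<Longrightarrow> (x powr (-3/2))^2 = 1 / x^3"
proof -
  assume x: "x > 0"
  have "(x powr (-3/2))^2 = x powr (-3/2) * x powr (-3/2)" by (simp only: power2_eq_square)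
  also have "\<dots> = x powr (-3/2 + -3/2)" by (rule powr_add[symmetric])
  also have "(-3/2 + -3/2) = (-3::real)" by simp
  also have "x powr (-3) = inverse (x powr 3)" by (rule powr_minus)
  also have "x powr 3 = x ^ 3" using x by (intro powr_numeral) simp
  finally show ?thesis by (simp only: divide_inverse mult_1)
qed

lemma cc_bound: "n \<ge> 1 \<Longrightarrow> cc n \<le> real n powr (-3/2)"
proof -
  assume n: "n \<ge> 1"
  have "(cc n)^2 \<le> (real n powr (-3/2))^2"
    using cc_sq[OF n] powr_sq_aux[of "real n"] n by simp
  then show ?thesis by (rule power2_le_imp_le) simp
qed

lemma summable_cc: "summable cc"
proof (rule summable_comparison_test')
  show "summable (\<lambda>n. real n powr (-3/2))" by (simp add: summable_real_powr_iff)
  show "norm (cc n) \<le> real n powr (-3/2)" if "n \<ge> 1" for n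
    using cc_bound[OF that] cc_nonneg[of n] by simp
qed

lemma ftc_real:
  fixes F f :: "real \<Rightarrow> real"
  assumes "a \<le> b" "\<And>x. x \<in> {a..b} \<Longrightarrow> (F has_real_derivative f x) (at x)"
  shows "(f has_integral (F b - F a)) {a..b}"
  using assms by (intro fundamental_theorem_of_calculus)
    (auto simp: has_real_derivative_iff_has_vector_derivative[symmetric] intro: has_field_derivative_at_within)

lemma ftc_real_interior:
  fixes F f :: "real \<Rightarrow> real"
  assumes "a \<le> b" "continuous_on {a..b} F" "\<And>x. x \<in> {a<..<b} \<Longrightarrow> (F has_real_derivative f x) (at x)"
  shows "(f has_integral (F b - F a)) {a..b}"
  using assms by (intro fundamental_theorem_of_calculus_interior)
    (auto simp: has_real_derivative_iff_has_vector_derivative[symmetric])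

lemma key_alg: "(v::real) * v = 1 - u * u \<Longrightarrow> u * (u * P) + v * (K * (- v) * P) = (K+1) * (u * u * P) - K * (P::real)"
  by algebra

lemma cos_pow_step:
  "((\<lambda>x. real (k+2) * cos x ^ (k+2) - real (k+1) * cos x ^ k) has_integral 0) {0..pi/2}"
proof -
  have "((\<lambda>x. real (k+2) * cos x ^ (k+2) - real (k+1) * cos x ^ k) has_integral
          (sin (pi/2) * cos (pi/2) ^ (k+1) - sin 0 * cos 0 ^ (k+1))) {0..pi/2}"
  proof (rule ftc_real)
    fix x :: real
    have d1: "((\<lambda>x. cos x ^ (k+1)) has_real_derivative (real (k+1) * (- sin x) * cos x ^ k)) (at x)"
      using DERIV_power[OF DERIV_cos[of x], of "k+1"] by (simp add: mult.assoc)
    have "((\<lambda>x. sin x * cos x ^ (k+1)) has_real_derivative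
           cos x * cos x ^ (k+1) + sin x * (real (k+1) * (- sin x) * cos x ^ k)) (at x)"
      by (rule DERIV_mult[OF DERIV_sin d1, THEN DERIV_cong]) (simp add: algebra_simps)
    moreover have "cos x * cos x ^ (k+1) + sin x * (real (k+1) * (- sin x) * cos x ^ k)
        = real (k+2) * cos x ^ (k+2) - real (k+1) * cos x ^ k"
    proof -
      have ss: "sin x * sin x = 1 - cos x * cos x" using sin_squared_eq[of x] by (simp add: power2_eq_square)
      have p: "cos x ^ (k+1) = cos x * cos x ^ k" "cos x ^ (k+2) = cos x * cos x * cos x ^ k" by simp_all
      have r: "real (k+2) = real (k+1) + 1" by simp
      show ?thesis unfolding p r using key_alg[OF ss, of "cos x ^ k" "real (k+1)"] by (simp add: mult.assoc)
    qed
    ultimately show "((\<lambda>x. sin x * cos x ^ (k+1)) has_real_derivative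
           real (k+2) * cos x ^ (k+2) - real (k+1) * cos x ^ k) (at x)" by simp
  qed simp
  then show ?thesis by simp
qed

lemma wallis_int: "((\<lambda>x. cos x ^ (2*m)) has_integral (pi/2 * w m)) {0..pi/2}"
proof (induction m)
  case 0
  have "((\<lambda>x. 1::real) has_integral (pi/2 - 0)) {0..pi/2}"
    by (rule ftc_real) (auto intro!: derivative_eq_intros)
  then show ?case by (simp add: w_0)
next
  case (Suc m)
  have A: "((\<lambda>x. (1/real (2*m+2)) * (real (2*m+2) * cos x ^ (2*m+2) - real (2*m+1) * cos x ^ (2*m))) has_integral 0) {0..pi/2}"
    using has_integral_mult_right[OF cos_pow_step[of "2*m"], of "1/real (2*m+2)"] by simp
  have B: "((\<lambda>x. (real (2*m+1)/real (2*m+2)) * cos x ^ (2*m)) has_integral (real (2*m+1)/real (2*m+2)) * (pi/2 * w m)) {0..pi/2}"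
    by (rule has_integral_mult_right[OF Suc.IH])
  have C: "((\<lambda>x. (1/real (2*m+2)) * (real (2*m+2) * cos x ^ (2*m+2) - real (2*m+1) * cos x ^ (2*m))
     + (real (2*m+1)/real (2*m+2)) * cos x ^ (2*m)) has_integral (0 + (real (2*m+1)/real (2*m+2)) * (pi/2 * w m))) {0..pi/2}"
    by (rule has_integral_add[OF A B])
  have gen: "a \<noteq> 0 \<Longrightarrow> (1/a)*(a*X - b*Y) + (b/a)*Y = X" for a b X Y :: real
    by (simp add: field_simps)
  have sm: "2 * Suc m = 2*m+2" by simp
  have e: "(1/real (2*m+2)) * (real (2*m+2) * cos x ^ (2*m+2) - real (2*m+1) * cos x ^ (2*m))
     + (real (2*m+1)/real (2*m+2)) * cos x ^ (2*m) = cos x ^ (2 * Suc m)" for x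
    unfolding sm by (rule gen) simp
  have f: "0 + (real (2*m+1)/real (2*m+2)) * (pi/2 * w m) = pi/2 * w (Suc m)"
  proof -
    have "real m + 1 > 0" by simp
    then show ?thesis unfolding w_Suc by (auto simp add: divide_simps) (simp add: algebra_simps)
  qed
  show ?case using C unfolding e f .
qed

lemma w_gchoose: "w m = (-1)^m * ((-1/2::real) gchoose m)"
proof (induction m)
  case 0 then show ?case by (simp add: w_0)
next
  case (Suc m)
  have g: "((-1/2::real) gchoose Suc m) = ((-1/2) gchoose m) * (-1/2 - real m) / (real m + 1)"
    using gbinomial_mult_1[of "-1/2::real" m] by (simp add: field_simps)
  show ?case unfolding w_Suc Suc.IH g
    by (simp add: field_simps)
qed

lemma binom_series: "\<bar>y\<bar> < 1 \<Longrightarrow> (\<lambda>m. w m * y^m) sums (1 / sqrt (1 - y))"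
proof -
  assume y: "\<bar>y\<bar> < 1"
  have "(\<lambda>n. ((-1/2::real) gchoose n) * (-y)^n) sums (1 + -y) powr (-1/2)"
    using y by (intro gen_binomial_real) simp
  moreover have "((-1/2::real) gchoose n) * (-y)^n = w n * y^n" for n
  proof -
    have "(-y)^n = (-1)^n * y^n" by (rule power_minus)
    moreover have "(-1::real)^n * (-1)^n = 1" by (simp flip: power_mult_distrib)
    ultimately show ?thesis unfolding w_gchoose by (simp only: mult_ac)
  qed
  moreover have "(1 + -y) powr (-1/2) = 1 / sqrt (1 - y)"
  proof -
    have "(1 - y) powr (-1/2) = inverse ((1-y) powr (1/2))" using powr_minus[of "1-y" "1/2"] by simp
    also have "(1-y) powr (1/2) = sqrt (1-y)" using y by (intro powr_half_sqrt) simp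
    finally show ?thesis by (simp only: inverse_eq_divide uminus_add_conv_diff add_uminus_conv_diff)
  qed
  ultimately show ?thesis by simp
qed

definition Gc :: "real \<Rightarrow> real" where "Gc y = 2 * ln 2 - 2 * ln (1 + sqrt (1 - y))"

definition Gs :: "real \<Rightarrow> real" where "Gs y = (\<Sum>n. (w (Suc n) / real (Suc n)) * y^(Suc n))"

lemma summable_wSuc: "\<bar>y\<bar> < 1 \<Longrightarrow> summable (\<lambda>n. w (Suc n) * y^n)"
proof (rule summable_comparison_test')
  assume "\<bar>y\<bar> < 1"
  then show "summable (\<lambda>n. \<bar>y\<bar>^n)" by (intro summable_geometric) simp
  show "norm (w (Suc n) * y^n) \<le> \<bar>y\<bar>^n" for n
    using w_le1[of "Suc n"] w_nonneg[of "Suc n"]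
    by (simp add: abs_mult power_abs mult_left_le_one_le)
qed

lemma Gs_deriv: "\<bar>y\<bar> < 1 \<Longrightarrow> (Gs has_real_derivative (\<Sum>n. w (Suc n) * y^n)) (at y)"
proof -
  assume y: "\<bar>y\<bar> < 1"
  have "DERIV (\<lambda>x. \<Sum>n. (w (Suc n) / real (Suc n)) * x^(Suc n)) y :>
        (\<Sum>n. (w (Suc n) / real (Suc n)) * real (Suc n) * y^n)"
    by (rule DERIV_power_series'[where R=1]) (use y summable_wSuc in \<open>auto simp del: of_nat_Suc\<close>)
  moreover have "(\<lambda>x. \<Sum>n. (w (Suc n) / real (Suc n)) * x^(Suc n)) = Gs" by (simp add: Gs_def fun_eq_iff)
  moreover have "(\<lambda>n. (w (Suc n) / real (Suc n)) * real (Suc n) * y^n) = (\<lambda>n. w (Suc n) * y^n)"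
    by (simp add: fun_eq_iff del: of_nat_Suc)
  ultimately show ?thesis by simp
qed

lemma D_times: "\<bar>y\<bar> < 1 \<Longrightarrow> y * (\<Sum>n. w (Suc n) * y^n) = 1 / sqrt (1 - y) - 1"
proof -
  assume y: "\<bar>y\<bar> < 1"
  have "(\<lambda>n. w (Suc n) * y^(Suc n)) sums (1 / sqrt (1 - y) - w 0 * y^0)"
    using binom_series[OF y] by (subst sums_Suc_iff) simp
  then have "(\<lambda>n. y * (w (Suc n) * y^n)) sums (1 / sqrt (1 - y) - 1)"
    by (simp add: w_0 mult_ac)
  moreover have "(\<lambda>n. y * (w (Suc n) * y^n)) sums (y * (\<Sum>n. w (Suc n) * y^n))"
    by (intro sums_mult summable_sums summable_wSuc y)
  ultimately show ?thesis using sums_unique2 by blast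
qed

lemma Gc_deriv: "\<bar>y\<bar> < 1 \<Longrightarrow> (Gc has_real_derivative 1 / (sqrt (1 - y) * (1 + sqrt (1 - y)))) (at y)"
proof -
  assume y: "\<bar>y\<bar> < 1"
  have s: "sqrt (1 - y) > 0" using y by simp
  have "(Gc has_real_derivative (0 - 2 * ((inverse (sqrt (1 - y)) / 2 * (0 - 1)) / (1 + sqrt (1 - y))))) (at y)"
    unfolding Gc_def using s
    by (auto intro!: derivative_eq_intros simp: add_pos_pos algebra_simps)
  moreover have "(0 - 2 * ((inverse (sqrt (1 - y)) / 2 * (0 - 1)) / (1 + sqrt (1 - y)))) = 1 / (sqrt (1 - y) * (1 + sqrt (1 - y)))"
  proof -
    have gen: "t > 0 \<Longrightarrow> (0 - 2 * ((inverse t / 2 * (0 - 1)) / (1 + t))) = 1 / (t * (1 + t))" for t :: real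
      by (simp add: inverse_eq_divide divide_divide_eq_left)
    show ?thesis using gen[OF s] .
  qed
  ultimately show ?thesis by simp
qed

lemma D_eq: "\<bar>y\<bar> < 1 \<Longrightarrow> (\<Sum>n. w (Suc n) * y^n) = 1 / (sqrt (1 - y) * (1 + sqrt (1 - y)))"
proof (cases "y = 0")
  case True
  have "(\<Sum>n. w (Suc n) * 0^n) = w 1" by (subst powser_zero) simp
  then show ?thesis using True by (simp add: w_Suc w_0)
next
  case False
  assume y: "\<bar>y\<bar> < 1"
  define s where "s = sqrt (1 - y)"
  have s: "s > 0" "s^2 = 1 - y" using y by (simp_all add: s_def)
  have s1: "s \<noteq> 1" using False s(2) by auto
  have "y * (\<Sum>n. w (Suc n) * y^n) = 1 / s - 1" using D_times[OF y] by (simp add: s_def)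
  then have "(\<Sum>n. w (Suc n) * y^n) = (1 / s - 1) / y" using False by (simp add: field_simps)
  also have "\<dots> = 1 / (s * (1 + s))"
  proof -
    have yy: "y = (1 - s) * (1 + s)" using s(2) by (simp add: power2_eq_square algebra_simps)
    have n1: "1 - s \<noteq> 0" using s1 by simp
    have n2: "1 + s \<noteq> 0" "s \<noteq> 0" using s(1) by simp_all
    have "(1 / s - 1) = (1 - s) / s" using n2 by (simp add: field_simps)
    then have "(1 / s - 1) / ((1 - s) * (1 + s)) = ((1 - s) / s) / ((1 - s) * (1 + s))" by simp
    also have "\<dots> = 1 / (s * (1 + s))" using n1 n2 by simp
    finally show ?thesis unfolding yy .
  qed
  finally show ?thesis by (simp add: s_def)
qed

lemma Gs_eq_Gc: "\<bar>y\<bar> < 1 \<Longrightarrow> Gs y = Gc y"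
proof -
  assume y: "\<bar>y\<bar> < 1"
  have "\<exists>c. \<forall>x\<in>{-1<..<1}. Gs x - Gc x = c"
  proof (rule has_field_derivative_zero_constant)
    fix x :: real assume x: "x \<in> {-1<..<1}"
    then have "\<bar>x\<bar> < 1" by auto
    then have "((\<lambda>x. Gs x - Gc x) has_real_derivative
       (\<Sum>n. w (Suc n) * x^n) - 1 / (sqrt (1 - x) * (1 + sqrt (1 - x)))) (at x)"
      by (intro DERIV_diff Gs_deriv Gc_deriv)
    then show "((\<lambda>x. Gs x - Gc x) has_real_derivative 0) (at x within {-1<..<1})"
      using D_eq[OF \<open>\<bar>x\<bar> < 1\<close>] by (auto intro: has_field_derivative_at_within)
  qed simp
  then obtain c where c: "\<And>x. x \<in> {-1<..<1} \<Longrightarrow> Gs x - Gc x = c" by blast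
  have "Gs 0 = 0" unfolding Gs_def by simp
  moreover have "Gc 0 = 0" unfolding Gc_def by simp
  ultimately have "c = 0" using c[of 0] by simp
  then show ?thesis using c[of y] y by (auto simp: abs_less_iff)
qed

lemma G_sums: "\<bar>y\<bar> < 1 \<Longrightarrow> (\<lambda>m. w m * y^m / real m) sums Gc y"
proof -
  assume y: "\<bar>y\<bar> < 1"
  have sm: "summable (\<lambda>n. (w (Suc n) / real (Suc n)) * y^(Suc n))"
  proof (rule summable_comparison_test')
    show "summable (\<lambda>n. \<bar>y\<bar>^n)" using y by (intro summable_geometric) simp
    show "norm ((w (Suc n) / real (Suc n)) * y^(Suc n)) \<le> \<bar>y\<bar>^n" for n
    proof -
      have "norm ((w (Suc n) / real (Suc n)) * y^(Suc n)) = (w (Suc n) / real (Suc n)) * (\<bar>y\<bar> * \<bar>y\<bar>^n)"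
        using w_nonneg[of "Suc n"] by (simp add: abs_mult power_abs)
      also have "\<dots> \<le> 1 * (1 * \<bar>y\<bar>^n)"
        using w_le1[of "Suc n"] w_nonneg[of "Suc n"] y
        by (intro mult_mono) (auto simp: divide_le_eq)
      finally show ?thesis by simp
    qed
  qed
  have "(\<lambda>n. (w (Suc n) / real (Suc n)) * y^(Suc n)) sums Gs y"
    using sm unfolding Gs_def by (rule summable_sums)
  then have "(\<lambda>n. w (Suc n) * y^(Suc n) / real (Suc n)) sums Gc y"
    using Gs_eq_Gc[OF y] by (simp add: mult_ac)
  then show ?thesis by (subst (asm) sums_Suc_iff) simp
qed

lemma cc_series: "\<bar>x\<bar> < 1 \<Longrightarrow> (\<lambda>n. cc n * x^(2*n)) sums (Gc x + Gc (-x))"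
proof -
  assume x: "\<bar>x\<bar> < 1"
  define b where "b m = w m * x^m / real m + w m * (-x)^m / real m" for m
  have "b sums (Gc x + Gc (-x))" unfolding b_def
    by (intro sums_add G_sums) (use x in auto)
  then have "(\<lambda>n. sum b {n*2..<n*2+2}) sums (Gc x + Gc (-x))"
    by (rule sums_group) simp
  moreover have "sum b {n*2..<n*2+2} = cc n * x^(2*n)" for n
  proof -
    have "sum b {n*2..<n*2+2} = b (2*n) + b (2*n+1)"
      by (simp add: numeral_2_eq_2 mult.commute)
    moreover have "b (2*n+1) = 0"
      unfolding b_def by (simp add: power_minus_odd)
    moreover have "b (2*n) = cc n * x^(2*n)"
    proof (cases "n = 0")
      case True then show ?thesis by (simp add: b_def cc_def)
    next
      case False
      have "(-x)^(2*n) = x^(2*n)" by (simp add: power_mult)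
      then show ?thesis unfolding b_def cc_def using False by (simp add: field_simps)
    qed
    ultimately show ?thesis by simp
  qed
  ultimately show ?thesis by simp
qed

lemma sqrt_1m_cos: "0 \<le> t \<Longrightarrow> t \<le> pi \<Longrightarrow> sqrt (1 - cos t) = sqrt 2 * sin (t/2)"
proof -
  assume t: "0 \<le> t" "t \<le> pi"
  have "cos t = 1 - 2 * (sin (t/2))^2" using cos_double_sin[of "t/2"] by simp
  then have "1 - cos t = 2 * (sin (t/2))^2" by simp
  moreover have "sin (t/2) \<ge> 0" using t by (intro sin_ge_zero) auto
  ultimately show ?thesis by (simp add: real_sqrt_mult)
qed

lemma sqrt_1p_cos: "0 \<le> t \<Longrightarrow> t \<le> pi \<Longrightarrow> sqrt (1 + cos t) = sqrt 2 * cos (t/2)"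
proof -
  assume t: "0 \<le> t" "t \<le> pi"
  have "cos t = 2 * (cos (t/2))^2 - 1" using cos_double_cos[of "t/2"] by simp
  then have "1 + cos t = 2 * (cos (t/2))^2" by simp
  moreover have "cos (t/2) \<ge> 0" using t by (intro cos_ge_zero) auto
  ultimately show ?thesis by (simp add: real_sqrt_mult)
qed

lemma sqrt2_sq: "sqrt 2 * sqrt 2 = (2::real)" by simp

lemma prod1: "1 + sqrt 2 * sin x = 2 * sqrt 2 * (cos (3*pi/8 - x/2) * cos (pi/8 - x/2))"
proof -
  have d: "3*pi/8 - x/2 - (pi/8 - x/2) = pi/4" "3*pi/8 - x/2 + (pi/8 - x/2) = pi/2 - x" by simp_all
  have "cos (3*pi/8 - x/2) * cos (pi/8 - x/2) = (cos (pi/4) + cos (pi/2 - x)) / 2"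
    unfolding cos_times_cos d ..
  also have "\<dots> = (sqrt 2 / 2 + sin x) / 2" by (simp add: cos_45 cos_diff)
  finally have "2 * sqrt 2 * (cos (3*pi/8 - x/2) * cos (pi/8 - x/2)) = sqrt 2 * (sqrt 2 / 2 + sin x)"
    by simp
  also have "\<dots> = 1 + sqrt 2 * sin x" by (simp add: algebra_simps)
  finally show ?thesis by simp
qed

lemma prod2: "1 + sqrt 2 * cos x = 2 * sqrt 2 * (cos (pi/8 + x/2) * cos (pi/8 - x/2))"
proof -
  have d: "pi/8 + x/2 - (pi/8 - x/2) = x" "pi/8 + x/2 + (pi/8 - x/2) = pi/4" by simp_all
  have "cos (pi/8 + x/2) * cos (pi/8 - x/2) = (cos x + cos (pi/4)) / 2"
    unfolding cos_times_cos d ..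
  also have "\<dots> = (cos x + sqrt 2 / 2) / 2" by (simp add: cos_45)
  finally have "2 * sqrt 2 * (cos (pi/8 + x/2) * cos (pi/8 - x/2)) = sqrt 2 * (cos x + sqrt 2 / 2)"
    by simp
  also have "\<dots> = 1 + sqrt 2 * cos x" by (simp add: algebra_simps)
  finally show ?thesis by simp
qed

lemma cos_pos_aux: "0 \<le> x \<Longrightarrow> x < pi/2 \<Longrightarrow> cos x > 0"
  by (rule cos_gt_zero_pi) auto

lemma ln_2sqrt2: "ln (2 * sqrt 2) = 3/2 * ln (2::real)"
  by (simp add: ln_mult ln_sqrt)

definition integrandV :: "real \<Rightarrow> real" where
  "integrandV t = - 2 * ln 2 - 2 * ln (cos (3*pi/8 - t/4)) - 4 * ln (cos (pi/8 - t/4)) - 2 * ln (cos (pi/8 + t/4))"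

lemma Gc_cos: "0 \<le> t \<Longrightarrow> t \<le> pi/2 \<Longrightarrow> Gc (cos t) + Gc (- cos t) = integrandV t"
proof -
  assume t: "0 \<le> t" "t \<le> pi/2"
  have a1: "cos (3*pi/8 - t/4) > 0" using t pi_gt_zero by (intro cos_pos_aux) linarith+
  have a2: "cos (pi/8 - t/4) > 0" using t pi_gt_zero by (intro cos_pos_aux) linarith+
  have a3: "cos (pi/8 + t/4) > 0" using t pi_gt_zero by (intro cos_pos_aux) linarith+
  have e1: "1 + sqrt (1 - cos t) = 2 * sqrt 2 * (cos (3*pi/8 - t/4) * cos (pi/8 - t/4))"
    using prod1[of "t/2"] sqrt_1m_cos[of t] t by simp
  have e2: "1 + sqrt (1 - - cos t) = 2 * sqrt 2 * (cos (pi/8 + t/4) * cos (pi/8 - t/4))"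
    using prod2[of "t/2"] sqrt_1p_cos[of t] t by simp
  have l1: "ln (1 + sqrt (1 - cos t)) = 3/2 * ln 2 + ln (cos (3*pi/8 - t/4)) + ln (cos (pi/8 - t/4))"
    unfolding e1 using a1 a2 by (simp add: ln_mult ln_sqrt)
  have l2: "ln (1 + sqrt (1 - - cos t)) = 3/2 * ln 2 + ln (cos (pi/8 + t/4)) + ln (cos (pi/8 - t/4))"
    unfolding e2 using a2 a3 by (simp add: ln_mult ln_sqrt)
  show ?thesis unfolding Gc_def integrandV_def l1 l2 by simp
qed

definition Cf :: "real \<Rightarrow> real" where "Cf x = integral {0..x} (\<lambda>t. ln (cos t))"

lemma Cf_0: "Cf 0 = 0" by (simp add: Cf_def)

lemma lncos_cont: "b < pi/2 \<Longrightarrow> continuous_on {0..b} (\<lambda>t. ln (cos t))"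
proof -
  assume b: "b < pi/2"
  have "\<forall>t\<in>{0..b}. cos t \<noteq> 0"
  proof
    fix t assume "t \<in> {0..b}"
    then have "cos t > 0" using b by (intro cos_pos_aux) auto
    then show "cos t \<noteq> 0" by simp
  qed
  then show ?thesis by (intro continuous_intros) auto
qed

lemma Cf_deriv_within: "b < pi/2 \<Longrightarrow> x \<in> {0..b} \<Longrightarrow> (Cf has_real_derivative ln (cos x)) (at x within {0..b})"
  unfolding Cf_def by (rule integral_has_real_derivative[OF lncos_cont])

lemma Cf_cont: "b < pi/2 \<Longrightarrow> continuous_on {0..b} Cf"
  unfolding continuous_on_eq_continuous_within
  using Cf_deriv_within DERIV_continuous by blast

lemma Cf_deriv: "0 < x \<Longrightarrow> x < pi/2 \<Longrightarrow> (Cf has_real_derivative ln (cos x)) (at x)"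
proof -
  assume x: "0 < x" "x < pi/2"
  define b where "b = (x + pi/2) / 2"
  have b: "b < pi/2" "x < b" using x by (simp_all add: b_def)
  have "(Cf has_real_derivative ln (cos x)) (at x within {0..b})"
    using b x by (intro Cf_deriv_within) auto
  moreover have "at x within {0..b} = at x" using b x by (intro at_within_Icc_at) auto
  ultimately show ?thesis by simp
qed

lemma Cf_chain:
  assumes "0 < a - c * t" "a - c * t < pi/2"
  shows "((\<lambda>t. Cf (a - c * t)) has_real_derivative (ln (cos (a - c * t)) * (- c))) (at t)"
proof -
  have "((\<lambda>t. a - c * t) has_real_derivative (- c)) (at t)"
    by (auto intro!: derivative_eq_intros)
  then show ?thesis using DERIV_chain2[where f=Cf and g="\<lambda>t. a - c * t", OF Cf_deriv[OF assms]] by blast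
qed

definition VV :: "real \<Rightarrow> real" where
  "VV t = - 2 * ln 2 * t + 8 * Cf (3*pi/8 - t/4) + 16 * Cf (pi/8 - t/4) - 8 * Cf (pi/8 + t/4)"

lemma VV_int: "(integrandV has_integral (- pi * ln 2 - 8 * Cf (3*pi/8) - 8 * Cf (pi/8))) {0..pi/2}"
proof -
  have "(integrandV has_integral (VV (pi/2) - VV 0)) {0..pi/2}"
  proof (rule ftc_real_interior)
    show "0 \<le> pi/2" by simp
    have c: "continuous_on {0..3*pi/8} Cf" by (rule Cf_cont) simp
    show "continuous_on {0..pi/2} VV" unfolding VV_def
      by (intro continuous_intros continuous_on_compose2[OF c]) (auto simp: field_simps)
    fix t :: real assume t: "t \<in> {0<..<pi/2}"
    have p: "pi > 0" by (rule pi_gt_zero)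
    have d1: "((\<lambda>t. Cf (3*pi/8 - (1/4) * t)) has_real_derivative (ln (cos (3*pi/8 - (1/4) * t)) * (- (1/4)))) (at t)"
      using t p by (intro Cf_chain) auto
    have d2: "((\<lambda>t. Cf (pi/8 - (1/4) * t)) has_real_derivative (ln (cos (pi/8 - (1/4) * t)) * (- (1/4)))) (at t)"
      using t p by (intro Cf_chain) auto
    have d3: "((\<lambda>t. Cf (pi/8 - (-1/4) * t)) has_real_derivative (ln (cos (pi/8 - (-1/4) * t)) * (- (-1/4)))) (at t)"
      using t p by (intro Cf_chain) auto
    have "(VV has_real_derivative
       (- 2 * ln 2 * 1 + 8 * (ln (cos (3*pi/8 - (1/4) * t)) * (- (1/4))) + 16 * (ln (cos (pi/8 - (1/4) * t)) * (- (1/4)))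
         - 8 * (ln (cos (pi/8 - (-1/4) * t)) * (- (-1/4))))) (at t)"
    proof -
      have e: "VV = (\<lambda>t. - 2 * ln 2 * t + 8 * Cf (3*pi/8 - (1/4) * t) + 16 * Cf (pi/8 - (1/4) * t) - 8 * Cf (pi/8 - (-1/4) * t))"
        by (simp add: VV_def fun_eq_iff)
      show ?thesis unfolding e
        by (intro DERIV_diff DERIV_add DERIV_cmult d1 d2 d3 DERIV_ident)
    qed
    moreover have "(- 2 * ln 2 * 1 + 8 * (ln (cos (3*pi/8 - (1/4) * t)) * (- (1/4))) + 16 * (ln (cos (pi/8 - (1/4) * t)) * (- (1/4)))
         - 8 * (ln (cos (pi/8 - (-1/4) * t)) * (- (-1/4)))) = integrandV t"
      unfolding integrandV_def by simp
    ultimately show "(VV has_real_derivative integrandV t) (at t)" by simp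
  qed
  moreover have "VV (pi/2) - VV 0 = - pi * ln 2 - 8 * Cf (3*pi/8) - 8 * Cf (pi/8)"
  proof -
    have e: "3*pi/8 - pi/2/4 = pi/4" "pi/8 - pi/2/4 = 0" "pi/8 + pi/2/4 = pi/4" by simp_all
    show ?thesis unfolding VV_def e by (simp add: Cf_0)
  qed
  ultimately show ?thesis by simp
qed

definition Sval :: real where "Sval = (\<Sum>n. tt (Suc n))"

lemma S_integral: "pi/2 * Sval = - pi * ln 2 - 8 * Cf (3*pi/8) - 8 * Cf (pi/8)"
proof -
  define Fs where "Fs t = (\<Sum>i. cc i * cos t ^ (2*i))" for t
  have u: "uniform_limit {0..pi/2} (\<lambda>n t. \<Sum>i<n. cc i * cos t ^ (2*i)) Fs sequentially"
    unfolding Fs_def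
  proof (rule Weierstrass_m_test[OF _ summable_cc])
    fix n and t :: real
    have "\<bar>cos t ^ (2*n)\<bar> \<le> 1" by (simp add: power_abs power_le_one)
    then show "norm (cc n * cos t ^ (2*n)) \<le> cc n"
      using cc_nonneg[of n] by (simp add: abs_mult mult_left_le)
  qed
  obtain I J where IJ: "\<And>n. ((\<lambda>t. \<Sum>i<n. cc i * cos t ^ (2*i)) has_integral I n) {0..pi/2}"
     "(Fs has_integral J) {0..pi/2}" "I \<longlonglongrightarrow> J"
    by (rule uniform_limit_integral[OF u]) (auto intro!: continuous_intros)
  have In: "I n = (\<Sum>i<n. cc i * (pi/2 * w i))" for n
  proof -
    have "((\<lambda>t. \<Sum>i<n. cc i * cos t ^ (2*i)) has_integral (\<Sum>i<n. cc i * (pi/2 * w i))) {0..pi/2}"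
      by (intro has_integral_sum has_integral_mult_right wallis_int) auto
    then show ?thesis using IJ(1)[of n] has_integral_unique by blast
  qed
  have "(\<lambda>i. cc i * (pi/2 * w i)) sums (pi/2 * Sval)"
  proof -
    have "(\<lambda>n. tt (Suc n)) sums Sval" unfolding Sval_def by (rule summable_sums[OF summable_tt])
    then have "tt sums Sval" by (subst (asm) sums_Suc_iff) (simp add: tt_def)
    then have "(\<lambda>i. pi/2 * tt i) sums (pi/2 * Sval)" by (rule sums_mult)
    moreover have "pi/2 * tt i = cc i * (pi/2 * w i)" for i unfolding tt_w cc_def by (simp add: mult_ac)
    ultimately show ?thesis by (simp add: mult_ac)
  qed
  then have "(\<lambda>n. \<Sum>i<n. cc i * (pi/2 * w i)) \<longlonglongrightarrow> pi/2 * Sval" by (simp add: sums_def)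
  then have J: "J = pi/2 * Sval" using IJ(3) unfolding In using LIMSEQ_unique by blast
  have "(integrandV has_integral J) {0..pi/2}"
  proof (rule has_integral_spike[OF negligible_sing _ IJ(2)])
    fix t assume t: "t \<in> {0..pi/2} - {0}"
    then have t1: "0 < t" "t \<le> pi/2" by auto
    have "cos t < 1" using t1 pi_gt_zero by (intro cos_monotone_0_pi[of 0 t, simplified]) auto
    moreover have "cos t \<ge> 0" using t1 by (intro cos_ge_zero) auto
    ultimately have "\<bar>cos t\<bar> < 1" by simp
    then have "Fs t = Gc (cos t) + Gc (- cos t)"
      unfolding Fs_def using cc_series sums_unique by (metis power_mult)
    then show "integrandV t = Fs t" using Gc_cos[of t] t1 by simp
  qed
  then show ?thesis using VV_int has_integral_unique J by blast
qed

lemma cos_half_pi_minus: "cos (pi/2 - x) = sin x" by (simp add: cos_diff)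

lemma Cf_cont_at: "0 < x \<Longrightarrow> x < pi/2 \<Longrightarrow> isCont Cf x"
  using Cf_deriv DERIV_isCont by blast

definition EE :: "real \<Rightarrow> real" where
  "EE a = 2 * Cf (pi/2 - a) - 2 * Cf a - Cf (pi/2 - 2*a) + (pi/2 - 2*a) * ln 2"

lemma EE_zero: "0 < a \<Longrightarrow> a < pi/4 \<Longrightarrow> EE a = 0"
proof -
  assume a: "0 < a" "a < pi/4"
  have c: "continuous_on {0..pi/2 - a} Cf" using a by (intro Cf_cont) simp
  have h2: "continuous_on {a..pi/4} EE" unfolding EE_def
      by (intro continuous_intros continuous_on_compose2[OF c]) (use a in auto)
  have h3: "(EE has_real_derivative 0) (at x)" if x: "a < x" "x < pi/4" for x
  proof -
    have p: "pi > 0" by (rule pi_gt_zero)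
    have d1: "((\<lambda>t. Cf (pi/2 - 1 * t)) has_real_derivative (ln (cos (pi/2 - 1 * x)) * (- 1))) (at x)"
      using x a p by (intro Cf_chain) auto
    have d2: "(Cf has_real_derivative ln (cos x)) (at x)" using x a by (intro Cf_deriv) auto
    have d3: "((\<lambda>t. Cf (pi/2 - 2 * t)) has_real_derivative (ln (cos (pi/2 - 2 * x)) * (- 2))) (at x)"
      using x a p by (intro Cf_chain) auto
    have d4: "((\<lambda>t. (pi/2 - 2*t) * ln 2) has_real_derivative (- 2 * ln 2)) (at x)"
      by (auto intro!: derivative_eq_intros)
    have e: "EE = (\<lambda>t. 2 * Cf (pi/2 - 1 * t) - 2 * Cf t - Cf (pi/2 - 2 * t) + (pi/2 - 2*t) * ln 2)"
      by (simp add: EE_def fun_eq_iff)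
    have "(EE has_real_derivative (2 * (ln (cos (pi/2 - 1 * x)) * (- 1)) - 2 * ln (cos x)
        - (ln (cos (pi/2 - 2 * x)) * (- 2)) + (- 2 * ln 2))) (at x)"
      unfolding e by (intro DERIV_add DERIV_diff DERIV_cmult d1 d2 d3 d4)
    moreover have "2 * (ln (cos (pi/2 - 1 * x)) * (- 1)) - 2 * ln (cos x)
        - (ln (cos (pi/2 - 2 * x)) * (- 2)) + (- 2 * ln 2) = 0"
    proof -
      have s: "sin x > 0" using x a p by (intro sin_gt_zero) auto
      have c: "cos x > 0" using x a p by (intro cos_pos_aux) auto
      have "ln (cos (pi/2 - 2 * x)) = ln 2 + ln (sin x) + ln (cos x)"
        unfolding cos_half_pi_minus sin_double using s c by (simp add: ln_mult)
      moreover have "cos (pi/2 - 1 * x) = sin x" by (simp add: cos_diff)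
      ultimately show ?thesis by simp
    qed
    ultimately show "(EE has_real_derivative 0) (at x)" by simp
  qed
  have "EE (pi/4) = EE a" by (rule DERIV_isconst_end[OF a(2) h2 h3])
  moreover have "EE (pi/4) = 0"
  proof -
    have "pi/2 - pi/4 = pi/4" "pi/2 - 2*(pi/4) = 0" by simp_all
    then show ?thesis unfolding EE_def by (simp add: Cf_0)
  qed
  ultimately show ?thesis by simp
qed

definition Ti :: "real \<Rightarrow> real" where
  "Ti y = (\<Sum>k. (-1)^k * y^(2*k+1) / (2*real k+1)^2)"

definition TiD :: "real \<Rightarrow> real" where
  "TiD y = (\<Sum>k. (-1)^k * y^(2*k) / (2*real k+1))"

lemma Ti_0: "Ti 0 = 0" by (simp add: Ti_def)

lemma TiD_bound: "\<bar>y\<bar> \<le> 1/2 \<Longrightarrow> norm ((-1)^k * y^(2*k) / (2*real k+1)) \<le> (1/4)^k"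
proof -
  assume y: "\<bar>y\<bar> \<le> 1/2"
  have "norm ((-1)^k * y^(2*k) / (2*real k+1)) = (y^2)^k / (2*real k+1)"
    by (simp add: abs_mult power_abs power_mult)
  also have "\<dots> \<le> (y^2)^k / 1" by (intro divide_left_mono) auto
  also have "\<dots> \<le> (1/4)^k"
  proof -
    have "\<bar>y\<bar>^2 \<le> (1/2)^2" by (rule power_mono) (use y in auto)
    then have "y^2 \<le> 1/4" by (simp add: power2_abs power2_eq_square)
    then show ?thesis by (simp add: power_mono)
  qed
  finally show ?thesis .
qed

lemma Ti_deriv: "\<bar>y\<bar> < 1/2 \<Longrightarrow> (Ti has_real_derivative TiD y) (at y)"
proof -
  assume y: "\<bar>y\<bar> < 1/2"
  let ?S = "{-1/2..1/2::real}"
  have "((\<lambda>x. \<Sum>k. (-1)^k * x^(2*k+1) / (2*real k+1)^2) has_field_derivative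
         (\<Sum>k. (-1)^k * y^(2*k) / (2*real k+1))) (at y)"
  proof (rule has_field_derivative_series'(2))
    show "convex ?S" by simp
    show "((\<lambda>x. (-1)^k * x^(2*k+1) / (2*real k+1)^2) has_field_derivative
            (-1)^k * x^(2*k) / (2*real k+1)) (at x within ?S)" for k x
    proof -
      define c where "c = (-1::real)^k / (2*real k+1)^2"
      have "((\<lambda>x. c * x^(2*k+1)) has_field_derivative c * (real (2*k+1) * x^(2*k+1 - Suc 0))) (at x)"
        by (intro DERIV_cmult DERIV_pow)
      then have "((\<lambda>x. c * x^(2*k+1)) has_field_derivative c * (real (2*k+1) * x^(2*k+1 - Suc 0))) (at x within ?S)"
        by (rule has_field_derivative_at_within)
      moreover have "c * (real (2*k+1) * x^(2*k+1 - Suc 0)) = (-1)^k * x^(2*k) / (2*real k+1)"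
      proof -
        have p: "2*real k+1 \<noteq> 0" by simp
        have gen: "d \<noteq> 0 \<Longrightarrow> a / (d * d) * (d * X) = a * X / d" for a d X :: real
          by (simp add: field_simps)
        have r: "real (2*k+1) = 2*real k+1" "2*k+1 - Suc 0 = 2*k" by simp_all
        show ?thesis unfolding c_def power2_eq_square r using gen[OF p] .
      qed
      moreover have "(\<lambda>x. c * x^(2*k+1)) = (\<lambda>x. (-1)^k * x^(2*k+1) / (2*real k+1)^2)"
        unfolding c_def by (simp add: fun_eq_iff)
      ultimately show ?thesis by simp
    qed
    show "uniformly_convergent_on ?S (\<lambda>n x. \<Sum>k<n. (-1)^k * x^(2*k) / (2*real k+1))"
    proof (rule Weierstrass_m_test'[of _ _ "\<lambda>k. (1/4)^k"])
      show "summable (\<lambda>k. (1/4::real)^k)" by (rule summable_geometric) simp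
      show "norm ((-1)^k * x^(2*k) / (2*real k+1)) \<le> (1/4)^k" if "x \<in> ?S" for k x
      proof -
        have "\<bar>x\<bar> \<le> 1/2" using that by auto
        then show ?thesis by (rule TiD_bound)
      qed
    qed
    show "(0::real) \<in> ?S" by simp
    show "summable (\<lambda>k. (-1)^k * (0::real)^(2*k+1) / (2*real k+1)^2)" by simp
    show "y \<in> interior ?S" using y by auto
  qed
  then show ?thesis unfolding Ti_def TiD_def by (simp add: fun_eq_iff)
qed

lemma TiD_arctan: "\<bar>y\<bar> < 1/2 \<Longrightarrow> y * TiD y = arctan y"
proof -
  assume y: "\<bar>y\<bar> < 1/2"
  have sm: "summable (\<lambda>k. (-1)^k * y^(2*k) / (2*real k+1))"
  proof (rule summable_comparison_test'[of "\<lambda>k. (1/4)^k" 0])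
    show "summable (\<lambda>k. (1/4::real)^k)" by (rule summable_geometric) simp
    show "norm ((-1)^k * y^(2*k) / (2*real k+1)) \<le> (1/4)^k" for k
      using TiD_bound[of y k] y by simp
  qed
  have "y * TiD y = (\<Sum>k. y * ((-1)^k * y^(2*k) / (2*real k+1)))"
    unfolding TiD_def by (rule suminf_mult[OF sm, symmetric])
  also have "\<dots> = (\<Sum>k. (-1)^k * (1 / real (k*2+1) * y^(k*2+1)))"
    by (intro suminf_cong) (simp add: mult_ac)
  also have "\<dots> = arctan y" using y by (intro arctan_series[symmetric]) auto
  finally show ?thesis .
qed

definition rr :: real where "rr = sqrt 2 - 1"

lemma tan_pi8: "tan (pi/8) = rr"
proof -
  have "tan (pi/8) = sin (2*(pi/8)) / (cos (2*(pi/8)) + 1)" by (rule tan_half)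
  also have "2*(pi/8) = pi/4" by simp
  also have "sin (pi/4) / (cos (pi/4) + 1) = (sqrt 2 / 2) / (sqrt 2 / 2 + 1)" by (simp add: sin_45 cos_45)
  also have "\<dots> = rr"
  proof -
    have p: "sqrt 2 / 2 + 1 > (0::real)" by (simp add: add_pos_pos)
    have gen: "u * u = 2 \<Longrightarrow> (u - 1) * (u / 2 + 1) = u / 2" for u :: real
    proof -
      assume u: "u * u = 2"
      have "(u - 1) * (u / 2 + 1) = (u * u) / 2 + u / 2 - 1" by (simp add: field_simps)
      then show ?thesis using u by simp
    qed
    have h: "rr * (sqrt 2 / 2 + 1) = sqrt 2 / 2"
      unfolding rr_def by (rule gen) simp
    have "(rr * (sqrt 2/2+1)) / (sqrt 2/2+1) = rr" using p by (intro nonzero_mult_div_cancel_right) simp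
    then show ?thesis unfolding h .
  qed
  finally show ?thesis .
qed

lemma rr_bounds: "0 < rr" "rr < 9/20"
proof -
  have "1 < sqrt (2::real)" by simp
  then show "0 < rr" by (simp add: rr_def)
  have "sqrt (2::real) < sqrt ((29/20)^2)" by (intro real_sqrt_less_mono) (simp add: power2_eq_square)
  then have "sqrt (2::real) < 29/20" by simp
  then show "rr < 9/20" by (simp add: rr_def)
qed

lemma tan_bounds: "0 < a \<Longrightarrow> a \<le> pi/8 \<Longrightarrow> 0 < tan a \<and> tan a \<le> rr"
proof -
  assume a: "0 < a" "a \<le> pi/8"
  have "0 < tan a" using a by (intro tan_gt_zero) auto
  moreover have "tan a \<le> tan (pi/8)"
  proof (cases "a = pi/8")
    case False
    then show ?thesis using a pi_gt_zero by (intro less_imp_le tan_monotone) auto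
  next
    case True
    show ?thesis unfolding True by simp
  qed
  ultimately show ?thesis using tan_pi8 by simp
qed

definition FF :: "real \<Rightarrow> real" where
  "FF t = - (pi/2 - 2*t) * ln 2 + Cf (pi/2 - 2*t) + 4 * Cf t + 2*t*ln (tan t) - 2 * Ti (tan t)"

lemma FF_deriv: "0 < x \<Longrightarrow> x \<le> pi/8 \<Longrightarrow> (FF has_real_derivative 0) (at x)"
proof -
  assume x: "0 < x" "x \<le> pi/8"
  have p: "pi > 0" by (rule pi_gt_zero)
  have tb: "0 < tan x" "tan x \<le> rr" using tan_bounds[OF x] by auto
  have cx: "cos x > 0" using x p by (intro cos_pos_aux) auto
  have sx: "sin x > 0" using x p by (intro sin_gt_zero) auto
  have dtan: "(tan has_real_derivative inverse ((cos x)^2)) (at x)" using cx by (intro DERIV_tan) simp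
  have d1: "((\<lambda>t. - (pi/2 - 2*t) * ln 2) has_real_derivative 2 * ln 2) (at x)"
    by (auto intro!: derivative_eq_intros)
  have d2: "((\<lambda>t. Cf (pi/2 - 2 * t)) has_real_derivative (ln (cos (pi/2 - 2 * x)) * (- 2))) (at x)"
    using x p by (intro Cf_chain) auto
  have d3: "(Cf has_real_derivative ln (cos x)) (at x)" using x p by (intro Cf_deriv) auto
  have dln: "((\<lambda>t. ln (tan t)) has_real_derivative inverse (tan x) * inverse ((cos x)^2)) (at x)"
    using DERIV_chain2[where f=ln and g=tan, OF DERIV_ln[OF tb(1)] dtan] .
  have d4: "((\<lambda>t. 2*t*ln (tan t)) has_real_derivative 2 * ln (tan x) + 2 * x * (inverse (tan x) * inverse ((cos x)^2))) (at x)"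
  proof -
    have "((\<lambda>t. 2*t) has_real_derivative 2) (at x)" by (auto intro!: derivative_eq_intros)
    from DERIV_mult[OF this dln] show ?thesis by (simp add: algebra_simps)
  qed
  have Tt: "\<bar>tan x\<bar> < 1/2" using tb rr_bounds by auto
  have d5: "((\<lambda>t. Ti (tan t)) has_real_derivative TiD (tan x) * inverse ((cos x)^2)) (at x)"
    using DERIV_chain2[where f=Ti and g=tan, OF Ti_deriv[OF Tt] dtan] .
  have e: "FF = (\<lambda>t. - (pi/2 - 2*t) * ln 2 + Cf (pi/2 - 2 * t) + 4 * Cf t + 2*t*ln (tan t) - 2 * Ti (tan t))"
    by (simp add: FF_def fun_eq_iff)
  have "(FF has_real_derivative (2 * ln 2 + ln (cos (pi/2 - 2 * x)) * (- 2) + 4 * ln (cos x)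
      + (2 * ln (tan x) + 2 * x * (inverse (tan x) * inverse ((cos x)^2))) - 2 * (TiD (tan x) * inverse ((cos x)^2)))) (at x)"
    unfolding e by (intro DERIV_add DERIV_diff DERIV_cmult d1 d2 d3 d4 d5)
  moreover have "2 * ln 2 + ln (cos (pi/2 - 2 * x)) * (- 2) + 4 * ln (cos x)
      + (2 * ln (tan x) + 2 * x * (inverse (tan x) * inverse ((cos x)^2))) - 2 * (TiD (tan x) * inverse ((cos x)^2)) = 0"
  proof -
    have "tan x * TiD (tan x) = x"
      using TiD_arctan[OF Tt] arctan_tan[of x] x p by auto
    then have td: "TiD (tan x) = x * inverse (tan x)" using tb(1) by (simp add: field_simps)
    have l1: "ln (cos (pi/2 - 2 * x)) = ln 2 + ln (sin x) + ln (cos x)"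
      unfolding cos_half_pi_minus sin_double using sx cx by (simp add: ln_mult)
    have l2: "ln (tan x) = ln (sin x) - ln (cos x)"
      unfolding tan_def using sx cx by (simp add: ln_div)
    show ?thesis unfolding td l1 l2 by (simp add: algebra_simps)
  qed
  ultimately show ?thesis by simp
qed

lemma FF_const: "0 < a \<Longrightarrow> a \<le> pi/8 \<Longrightarrow> FF a = FF (pi/8)"
proof (cases "a = pi/8")
  case False
  assume a: "0 < a" "a \<le> pi/8"
  then have a': "a < pi/8" using False by simp
  have "FF (pi/8) = FF a"
  proof (rule DERIV_isconst_end[OF a'])
    show "continuous_on {a..pi/8} FF"
    proof (rule continuous_at_imp_continuous_on, rule ballI)
      fix x assume "x \<in> {a..pi/8}"
      then have "0 < x" "x \<le> pi/8" using a by auto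
      then show "isCont FF x" by (rule DERIV_isCont[OF FF_deriv])
    qed
    show "\<And>x. a < x \<Longrightarrow> x < pi/8 \<Longrightarrow> DERIV FF x :> 0" using a by (intro FF_deriv) auto
  qed
  then show ?thesis by simp
next
  case True
  show ?thesis unfolding True ..
qed

definition RR :: "real \<Rightarrow> real" where
  "RR a = - (pi - 4*a) * ln 2 - 2 * Cf (2*a) + 8 * Cf a + 4*a * ln ((1 - (tan a)^2) / 2)
          - 4 * Ti (tan a) + 2 * Ti (tan (2*a))"

lemma RR_eq: "0 < a \<Longrightarrow> a \<le> pi/16 \<Longrightarrow> RR a = 2 * FF a - FF (2*a)"
proof -
  assume a: "0 < a" "a \<le> pi/16"
  have p: "pi > 0" by (rule pi_gt_zero)
  have E: "EE (2*a) = 0" using a p by (intro EE_zero) auto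
  have tb: "0 < tan a" "tan a \<le> rr" using tan_bounds[of a] a p by auto
  have t1: "tan a < 1" using tb rr_bounds by simp
  have ca: "cos a \<noteq> 0" using a p cos_pos_aux[of a] by auto
  have c2a: "cos (2*a) \<noteq> 0" using a p cos_pos_aux[of "2*a"] by auto
  have t2: "tan (2*a) = 2 * tan a / (1 - (tan a)^2)" by (rule tan_double[OF ca c2a])
  have "(tan a)^2 < 1^2" by (rule power_strict_mono) (use tb t1 in auto)
  then have pos: "1 - (tan a)^2 > 0" by simp
  have L: "ln ((1 - (tan a)^2) / 2) = ln (tan a) - ln (tan (2*a))"
    unfolding t2 using pos tb by (simp add: ln_div ln_mult)
  have key: "4*a * ln ((1 - (tan a)^2) / 2) = 2 * (2*a) * ln (tan a) - 2*(2*a)*ln (tan (2*a))"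
    unfolding L by (simp add: algebra_simps)
  show ?thesis using E key unfolding EE_def RR_def FF_def by (simp add: algebra_simps)
qed

lemma Ti_cont: "continuous_on {0..9/20} Ti"
proof (rule continuous_at_imp_continuous_on, rule ballI)
  fix x :: real assume "x \<in> {0..9/20}"
  then have "\<bar>x\<bar> < 1/2" by auto
  then show "isCont Ti x" by (rule DERIV_isCont[OF Ti_deriv])
qed

lemma tan_range: "a \<in> {0..pi/8} \<Longrightarrow> tan a \<in> {0..9/20} \<and> cos a \<noteq> 0 \<and> tan a \<le> rr"
proof -
  assume a: "a \<in> {0..pi/8}"
  have p: "pi > 0" by (rule pi_gt_zero)
  have a0: "0 \<le> a" "a \<le> pi/8" using a by auto
  have a': "0 \<le> a" "a < pi/2" using a0 p by linarith+
  have c: "cos a > 0" using a' by (intro cos_pos_aux)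
  show ?thesis
  proof (cases "a = 0")
    case True then show ?thesis using rr_bounds by simp
  next
    case False
    then have "0 < a" "a \<le> pi/8" using a by auto
    from tan_bounds[OF this] show ?thesis using c rr_bounds by auto
  qed
qed

lemma RR_cont: "continuous_on {0..pi/16} RR"
proof -
  have p: "pi > 0" by (rule pi_gt_zero)
  have sub: "{0..pi/16} \<subseteq> {0..pi/8}" using p by auto
  have cC: "continuous_on {0..pi/8} Cf" by (rule Cf_cont) (use p in simp)
  have c1: "continuous_on {0..pi/16} (\<lambda>a. Cf (2*a))"
    by (rule continuous_on_compose2[OF cC]) (auto intro!: continuous_intros)
  have c2: "continuous_on {0..pi/16} Cf" by (rule continuous_on_subset[OF cC sub])
  have ctan: "continuous_on {0..pi/16} tan"
    by (rule continuous_on_tan) (use sub tan_range in blast)+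
  have ctan2: "continuous_on {0..pi/16} (\<lambda>a. tan (2*a))"
  proof -
    have "continuous_on {0..pi/8} tan" by (rule continuous_on_tan) (use tan_range in blast)+
    then show ?thesis by (rule continuous_on_compose2) (auto intro!: continuous_intros)
  qed
  have c3: "continuous_on {0..pi/16} (\<lambda>a. Ti (tan a))"
    by (rule continuous_on_compose2[OF Ti_cont ctan]) (use sub tan_range in blast)
  have c4: "continuous_on {0..pi/16} (\<lambda>a. Ti (tan (2*a)))"
    by (rule continuous_on_compose2[OF Ti_cont ctan2]) (use tan_range in auto)
  have g: "continuous_on {0..pi/16} (\<lambda>a. (1 - (tan a)^2) / 2)"
    by (intro continuous_on_divide continuous_on_diff continuous_on_const continuous_on_power ctan) auto
  have nz: "\<forall>x\<in>{0..pi/16}. (1 - (tan x)^2) / 2 \<noteq> 0"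
  proof
    fix x assume "x \<in> {0..pi/16}"
    then have "tan x \<in> {0..9/20}" using sub tan_range by blast
    then have "(tan x)^2 \<le> (9/20)^2" by (intro power_mono) auto
    then show "(1 - (tan x)^2) / 2 \<noteq> 0" by (simp add: power2_eq_square)
  qed
  have c5: "continuous_on {0..pi/16} (\<lambda>a. ln ((1 - (tan a)^2) / 2))"
    by (rule continuous_on_ln[OF g nz])
  show ?thesis unfolding RR_def
    by (intro continuous_on_add continuous_on_diff continuous_on_mult continuous_on_const
        continuous_on_id continuous_on_minus c1 c2 c3 c4 c5)
qed

lemma FF_value: "FF (pi/8) = - pi * ln 2"
proof -
  have p: "pi > 0" by (rule pi_gt_zero)
  have h1: "continuous_on (closure {0<..pi/16}) RR" using RR_cont p by simp
  have h2: "RR x = FF (pi/8)" if x: "x \<in> {0<..pi/16}" for x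
  proof -
    have "RR x = 2 * FF x - FF (2*x)" using x by (intro RR_eq) auto
    also have "FF x = FF (pi/8)" using x p by (intro FF_const) auto
    also have "FF (2*x) = FF (pi/8)" using x p by (intro FF_const) auto
    finally show "RR x = FF (pi/8)" by simp
  qed
  have h3: "0 \<in> closure {0<..pi/16::real}" using p by simp
  have "RR 0 = FF (pi/8)" by (rule continuous_constant_on_closure[OF h1 h2 h3])
  moreover have "RR 0 = - pi * ln 2" unfolding RR_def by (simp add: Cf_0 Ti_0)
  ultimately show ?thesis by simp
qed

lemma Li2_Im: "Im (Li2 (complex_of_real (sqrt 2 - 1) * \<i>)) = Ti rr"
proof -
  define z where "z = complex_of_real rr * \<i>"
  have nz: "norm z = rr" using rr_bounds unfolding z_def by (simp add: norm_mult)
  have sm: "summable (\<lambda>k. z^(Suc k) / of_nat (Suc k)^2)"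
  proof (rule summable_comparison_test'[of "\<lambda>k. rr^(Suc k)" 0])
    show "summable (\<lambda>k. rr^(Suc k))" using rr_bounds
      by (subst summable_Suc_iff) (intro summable_geometric, simp)
    show "norm (z^(Suc k) / of_nat (Suc k)^2) \<le> rr^(Suc k)" for k
    proof -
      have n1: "norm (z^(Suc k)) = rr^(Suc k)" by (simp only: norm_power nz)
      have n2: "norm ((of_nat (Suc k) :: complex)^2) = (real (Suc k))^2" by (simp only: norm_power norm_of_nat)
      have "norm (z^(Suc k) / of_nat (Suc k)^2) = rr^(Suc k) / (real (Suc k))^2"
        by (simp only: norm_divide n1 n2)
      also have "\<dots> \<le> rr^(Suc k) / 1" using rr_bounds
        by (intro divide_left_mono) (auto simp: power_one_over)
      finally show ?thesis by simp
    qed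
  qed
  have "(\<lambda>k. Im (z^(Suc k) / of_nat (Suc k)^2)) sums Im (Li2 z)"
    unfolding Li2_def by (intro sums_Im summable_sums sm)
  then have "(\<lambda>n. sum (\<lambda>k. Im (z^(Suc k) / of_nat (Suc k)^2)) {n*2..<n*2+2}) sums Im (Li2 z)"
    by (rule sums_group) simp
  moreover have "sum (\<lambda>k. Im (z^(Suc k) / of_nat (Suc k)^2)) {n*2..<n*2+2} = (-1)^n * rr^(2*n+1) / (2*real n+1)^2" for n
  proof -
    have s: "sum (\<lambda>k. Im (z^(Suc k) / of_nat (Suc k)^2)) {n*2..<n*2+2}
       = Im (z^(2*n+1) / of_nat (2*n+1)^2) + Im (z^(2*n+2) / of_nat (2*n+2)^2)"
      by (simp add: numeral_2_eq_2 mult.commute)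
    have i1: "\<i> ^ (2*n+1) = (-1)^n * \<i>" by (simp add: power_add power_mult)
    have i2: "\<i> ^ (2*n+2) = (-1)^(n+1)" by (simp add: power_add power_mult)
    have z1: "z^(2*n+1) = complex_of_real (rr^(2*n+1) * (-1)^n) * \<i>"
      unfolding z_def power_mult_distrib i1 by simp
    have z2: "z^(2*n+2) = complex_of_real (rr^(2*n+2) * (-1)^(n+1))"
      unfolding z_def power_mult_distrib i2 by simp
    have "Im (z^(2*n+2) / of_nat (2*n+2)^2) = 0"
      unfolding z2 by (metis Im_complex_of_real of_real_divide of_real_of_nat_eq of_real_power)
    moreover have "Im (z^(2*n+1) / of_nat (2*n+1)^2) = (-1)^n * rr^(2*n+1) / (2*real n+1)^2"
    proof -
      define A where "A = rr^(2*n+1) * (-1)^n"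
      define B where "B = (real (2*n+1))^2"
      have q: "(of_nat (2*n+1) :: complex)^2 = complex_of_real B" unfolding B_def by simp
      have g: "(complex_of_real A * \<i>) / complex_of_real B = complex_of_real (A / B) * \<i>"
        by (simp add: of_real_divide)
      have "Im (z^(2*n+1) / of_nat (2*n+1)^2) = A / B"
        unfolding z1 q A_def[symmetric] g by simp
      then show ?thesis unfolding A_def B_def by (simp add: mult_ac)
    qed
    ultimately show ?thesis unfolding s by simp
  qed
  ultimately have "(\<lambda>n. (-1)^n * rr^(2*n+1) / (2*real n+1)^2) sums Im (Li2 z)" by simp
  then have "Ti rr = Im (Li2 z)" unfolding Ti_def by (rule sums_unique[symmetric])
  then show ?thesis by (simp add: z_def rr_def)
qed

lemma Sval_closed: "Sval = 6 * ln 2 - 2 * ln (1 + sqrt 2) - 16 / pi * Ti rr"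
proof -
  have p: "pi > 0" by (rule pi_gt_zero)
  have S: "pi/2 * Sval = - pi * ln 2 - 8 * Cf (3*pi/8) - 8 * Cf (pi/8)" by (rule S_integral)
  have E: "EE (pi/8) = 0" using p by (intro EE_zero) auto
  have e1: "pi/2 - pi/8 = 3*pi/8" "pi/2 - 2*(pi/8) = pi/4" by simp_all
  have E': "2 * Cf (3*pi/8) - 2 * Cf (pi/8) - Cf (pi/4) + (pi/4) * ln 2 = 0"
    using E unfolding EE_def e1 by simp
  have F: "- (pi/4) * ln 2 + Cf (pi/4) + 4 * Cf (pi/8) + (pi/4) * ln rr - 2 * Ti rr = - pi * ln 2"
  proof -
    have e2: "2*(pi/8) = pi/4" by simp
    show ?thesis using FF_value unfolding FF_def e1 e2 tan_pi8 by simp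
  qed
  have lr: "ln (1 + sqrt 2) = - ln rr"
  proof -
    have gen: "(u - 1) * (1 + u) = u * u - 1" for u :: real by (simp add: algebra_simps)
    have m: "rr * (1 + sqrt 2) = 1" unfolding rr_def gen by simp
    have p1: "1 + sqrt 2 > (0::real)" by (simp add: add_pos_pos)
    have "ln (rr * (1 + sqrt 2)) = ln rr + ln (1 + sqrt 2)" using rr_bounds(1) p1 by (simp add: ln_mult)
    then have "ln rr + ln (1 + sqrt 2) = 0" unfolding m by simp
    then show ?thesis by simp
  qed
  define PL where "PL = pi * ln 2"
  define PR where "PR = pi * ln rr"
  define PS where "PS = pi * Sval"
  have S': "PS / 2 = - PL - 8 * Cf (3*pi/8) - 8 * Cf (pi/8)" using S unfolding PS_def PL_def by simp
  have E'': "2 * Cf (3*pi/8) - 2 * Cf (pi/8) - Cf (pi/4) + PL / 4 = 0" using E' unfolding PL_def by simp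
  have F': "- PL / 4 + Cf (pi/4) + 4 * Cf (pi/8) + PR / 4 - 2 * Ti rr = - PL" using F unfolding PL_def PR_def by simp
  have "PS = 6 * PL + 2 * PR - 16 * Ti rr" using S' E'' F' by linarith
  then have "pi/2 * Sval = pi/2 * (6 * ln 2 + 2 * ln rr) - 8 * Ti rr"
    unfolding PS_def PL_def PR_def by (simp add: algebra_simps)
  then have "Sval = 6 * ln 2 + 2 * ln rr - 16 / pi * Ti rr"
    using p by (simp add: field_simps)
  then show ?thesis unfolding lr by simp
qed

theorem mainTheorem13:
  defines "t \<equiv> (\<lambda>n::nat. real ((4*n) choose (2*n)) * real ((2*n) choose n) / (real n * 64 ^ n))"
  shows "summable (\<lambda>n. t (Suc n))
    \<and> summable (hypergeom_term [1, 1, 5/4, 7/4] [2, 2, 2] 1)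
    \<and> (\<Sum>n. t (Suc n)) = 3/16 * hypergeom [1, 1, 5/4, 7/4] [2, 2, 2] 1
    \<and> 3/16 * hypergeom [1, 1, 5/4, 7/4] [2, 2, 2] 1
        = 6 * ln 2 - 2 * ln (1 + sqrt 2)
          - 16 / pi * Im (Li2 (complex_of_real (sqrt 2 - 1) * \<i>))"
proof -
  have tt: "t = tt" unfolding t_def tt_def by simp
  have hh_eq: "hh = (\<lambda>n. 16/3 * tt (Suc n))" by (simp add: fun_eq_iff tt_hh)
  have s1: "summable (\<lambda>n. t (Suc n))" unfolding tt by (rule summable_tt)
  have s2: "summable hh" unfolding hh_eq by (intro summable_mult summable_tt)
  have h: "hypergeom [1, 1, 5/4, 7/4] [2, 2, 2] 1 = 16/3 * Sval"
    unfolding hypergeom_def hh_eq Sval_def by (rule suminf_mult[OF summable_tt])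
  have e3: "(\<Sum>n. t (Suc n)) = 3/16 * hypergeom [1, 1, 5/4, 7/4] [2, 2, 2] 1"
    unfolding h tt Sval_def by simp
  have e4: "3/16 * hypergeom [1, 1, 5/4, 7/4] [2, 2, 2] 1
        = 6 * ln 2 - 2 * ln (1 + sqrt 2) - 16 / pi * Im (Li2 (complex_of_real (sqrt 2 - 1) * \<i>))"
    unfolding h Li2_Im Sval_closed by simp
  show ?thesis using s1 s2 e3 e4 by blast
qed

end
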